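(* Consider the FedAvg round $t$ with coordinate-wise chip-diverse REED transmission (defined in the context) with deterministic weights $c_1,\dots,c_M\ge0$, $C_M=\sum_m c_m>0$, and assume $\|g_{k,q}^t\|\le G$ almost surely for all $k,q,t$. Suppose each client $k$ is subject to the per-round average energy constraint $$\frac1d\sum_{j=1}^d\sum_{m=1}^M\left(|a_{k,j,m,+}^t|^2+|a_{k,j,m,-}^t|^2\right)\le E_k,$$ with $E_k>0$. Then the deterministic choice $$\eta=\min_{k\in\{1,\dots,K\}}\frac{E_kK\sqrt d\,\mu_k^2}{C_M\beta QG}$$ satisfies all client energy constraints. Hence, for fixed system parameters ($K,d,Q,G,\sigma_z^2,\{E_k\},\{\mu_k\}$) and fixed chip weights, $\eta=\Theta(1/\beta)$, and both quantities $$\sigma_{\mathrm{air}}^2=(\beta QG)^2+\frac{2\sigma_z^2\sqrt d}{\eta}(\beta QG)+\frac{2d\sigma_z^4}{\eta^2}$$ (for $M=1$, $c_1=1$) and $$\sigma_{\mathrm{air}}^2=\frac{\sum_{m}c_m^2}{C_M^2}(\beta QG)^2+\frac{2\sigma_z^2\sqrt d}{\eta C_M}(\beta QG)+\frac{2dM\sigma_z^4}{\eta^2C_M^2}$$ satisfy $\sigma_{\mathrm{air}}^2=O(\beta^2)$ as $\beta\to0$.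
   Context: FedAvg setup: $K$ clients, model dimension $d$; at round $t$ each client starts from the global model $w^t$ and runs $Q$ local steps $w_{k,q+1}^t=w_{k,q}^t-\beta g_{k,q}^t$ with stepsize $\beta>0$ and stochastic gradients $g_{k,q}^t$; the local increment is $\Delta_k^t=-\beta\sum_{q=0}^{Q-1}g_{k,q}^t$. Coordinate-wise REED transmission: with $\eta>0$, average channel powers $\mu_k^2>0$, and $u_{k,j}^t=\frac1K[\Delta_k^t]_j$, client $k$ transmits on coordinate $j$, chip $m\in\{1,\dots,M\}$, branch $\pm$ the symbol $a_{k,j,m,\pm}^t=\frac{\sqrt{\eta c_m[u_{k,j}^t]_\pm}}{\mu_k}e^{\mathrm{i}\phi_{k,j,m,\pm}^t}$, where $[x]_+=\max\{x,0\}$, $[x]_-=\max\{-x,0\}$ and $\phi$ are phases. $\sigma_z^2>0$ is the receiver noise variance. *)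

theory Defs
  imports "HOL-Analysis.Analysis" "HOL-Library.Landau_Symbols"
begin

definition pos_part :: "real \<Rightarrow> real" where "pos_part x = max x 0"
definition neg_part :: "real \<Rightarrow> real" where "neg_part x = max (- x) 0"

definition local_increment ::
  "real \<Rightarrow> nat \<Rightarrow> (nat \<Rightarrow> nat \<Rightarrow> nat \<Rightarrow> real^'d) \<Rightarrow> nat \<Rightarrow> nat \<Rightarrow> real^'d" where
  "local_increment \<beta> Q g t k = - (\<beta> *\<^sub>R (\<Sum>q<Q. g t k q))"

definition reed_u ::
  "nat \<Rightarrow> real \<Rightarrow> nat \<Rightarrow> (nat \<Rightarrow> nat \<Rightarrow> nat \<Rightarrow> real^'d) \<Rightarrow> nat \<Rightarrow> nat \<Rightarrow> 'd \<Rightarrow> real" where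
  "reed_u K \<beta> Q g t k j = (1 / real K) * (local_increment \<beta> Q g t k $ j)"

definition reed_symbol ::
  "real \<Rightarrow> (nat \<Rightarrow> real) \<Rightarrow> (nat \<Rightarrow> real) \<Rightarrow> nat \<Rightarrow> real \<Rightarrow> nat
   \<Rightarrow> (nat \<Rightarrow> nat \<Rightarrow> nat \<Rightarrow> real^'d)
   \<Rightarrow> (nat \<Rightarrow> nat \<Rightarrow> 'd \<Rightarrow> nat \<Rightarrow> bool \<Rightarrow> real)
   \<Rightarrow> nat \<Rightarrow> nat \<Rightarrow> 'd \<Rightarrow> nat \<Rightarrow> bool \<Rightarrow> complex" where
  "reed_symbol \<eta> c \<mu> K \<beta> Q g \<phi> t k j m b =
     complex_of_real
       (sqrt (\<eta> * c m * (if b then pos_part (reed_u K \<beta> Q g t k j)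
                                else neg_part (reed_u K \<beta> Q g t k j))) / \<mu> k)
     * cis (\<phi> t k j m b)"

definition reed_eta ::
  "nat \<Rightarrow> nat \<Rightarrow> (nat \<Rightarrow> real) \<Rightarrow> (nat \<Rightarrow> real) \<Rightarrow> real \<Rightarrow> nat \<Rightarrow> real \<Rightarrow> real \<Rightarrow> real" where
  "reed_eta K d E \<mu> CM Q G \<beta> =
     Min ((\<lambda>k. E k * real K * sqrt (real d) * (\<mu> k)^2 / (CM * \<beta> * real Q * G)) ` {1..K})"

end

theory Submission imports Defs begin

lemma l1_le: fixes x :: "real^'d"
  shows "(\<Sum>j\<in>UNIV. \<bar>x $ j\<bar>) \<le> sqrt (real CARD('d)) * norm x"
proof -
  have "(\<Sum>j\<in>UNIV. \<bar>x $ j\<bar>) = (\<Sum>j\<in>UNIV. \<bar>x $ j\<bar> * \<bar>1::real\<bar>)" by simp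
  also have "\<dots> \<le> L2_set (\<lambda>j. x $ j) UNIV * L2_set (\<lambda>_. 1::real) (UNIV::'d set)"
    using L2_set_mult_ineq[of "\<lambda>j. x$j" "\<lambda>_. 1::real" "UNIV::'d set"] by simp
  also have "L2_set (\<lambda>j. x $ j) UNIV = norm x"
    unfolding norm_vec_def L2_set_def by simp
  also have "L2_set (\<lambda>_. 1::real) (UNIV::'d set) = sqrt (real CARD('d))"
    unfolding L2_set_def by simp
  finally show ?thesis by (simp add: mult.commute)
qed

lemma eta_eq:
  assumes "\<beta> > 0" "K > 0"
  shows "reed_eta K d E \<mu> CM Q G \<beta> =
    Min ((\<lambda>k. E k * real K * sqrt (real d) * (\<mu> k)^2 / (CM * real Q * G)) ` {1..K}) / \<beta>"
proof -
  have m: "mono (\<lambda>x::real. x / \<beta>)" using assms by (auto intro!: monoI divide_right_mono)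
  show ?thesis
  proof (cases "K = 0")
    case True then show ?thesis using assms by simp
  next
    case False
    then show ?thesis
      unfolding reed_eta_def
      by (subst mono_Min_commute[OF m]) (auto simp: image_image mult.commute mult.left_commute)
  qed
qed

lemma sym_sq:
  assumes "x \<ge> 0"
  shows "(cmod (complex_of_real (sqrt x / m) * cis p))^2 = x / m^2"
  using assms by (simp add: norm_mult norm_divide power_divide)

lemma energy:
  fixes g :: "nat \<Rightarrow> nat \<Rightarrow> nat \<Rightarrow> real^'d"
  assumes b: "\<beta> > 0" and Kp: "K > 0" and Qp: "Q > 0" and Gp: "G > 0"
    and cn: "\<forall>m\<in>{1..M}. c m \<ge> 0" and CMp: "(\<Sum>m=1..M. c m) > 0"
    and mu: "(\<mu> k)^2 > 0" and gb: "\<forall>t' k q. norm (g t' k q) \<le> G"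
    and en: "\<eta> \<ge> 0"
    and eb: "\<eta> \<le> E k * real K * sqrt (real CARD('d)) * (\<mu> k)^2 / ((\<Sum>m=1..M. c m) * \<beta> * real Q * G)"
  shows "(1 / real CARD('d)) *
             (\<Sum>j\<in>(UNIV::'d set). \<Sum>m=1..M.
                (cmod (reed_symbol \<eta> c \<mu> K \<beta> Q g \<phi> t k j m True))^2
              + (cmod (reed_symbol \<eta> c \<mu> K \<beta> Q g \<phi> t k j m False))^2)
           \<le> E k"
proof -
  define CM where "CM = (\<Sum>m=1..M. c m)"
  define d where "d = real CARD('d)"
  define S where "S = (\<Sum>q<Q. g t k q)"
  define u where "u = (\<lambda>j. reed_u K \<beta> Q g t k j)"
  have dpos: "d > 0" unfolding d_def by simp
  have Sb: "(\<Sum>j\<in>UNIV. \<bar>S $ j\<bar>) \<le> sqrt d * (real Q * G)"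
  proof -
    have "norm S \<le> (\<Sum>q<Q. norm (g t k q))" unfolding S_def by (rule norm_sum)
    also have "\<dots> \<le> (\<Sum>q<Q. G)" by (intro sum_mono) (use gb in auto)
    finally have "norm S \<le> real Q * G" by simp
    then show ?thesis using l1_le[of S] unfolding d_def
      by (meson order_trans mult_left_mono real_sqrt_ge_zero of_nat_0_le_iff)
  qed
  have uj: "\<bar>u j\<bar> = \<beta> / real K * \<bar>S $ j\<bar>" for j
    using b Kp unfolding u_def reed_u_def local_increment_def S_def
    by (simp add: abs_mult)
  have tm: "(cmod (reed_symbol \<eta> c \<mu> K \<beta> Q g \<phi> t k j m True))^2
              + (cmod (reed_symbol \<eta> c \<mu> K \<beta> Q g \<phi> t k j m False))^2
        = \<eta> * c m * \<bar>u j\<bar> / (\<mu> k)^2" if m: "m \<in> {1..M}" for j m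
  proof -
    have cm: "c m \<ge> 0" using cn m by auto
    have "(cmod (reed_symbol \<eta> c \<mu> K \<beta> Q g \<phi> t k j m True))^2 = \<eta> * c m * pos_part (u j) / (\<mu> k)^2"
      unfolding reed_symbol_def u_def if_True
      by (rule sym_sq) (use cm en in \<open>auto simp: pos_part_def\<close>)
    moreover have "(cmod (reed_symbol \<eta> c \<mu> K \<beta> Q g \<phi> t k j m False))^2 = \<eta> * c m * neg_part (u j) / (\<mu> k)^2"
      unfolding reed_symbol_def u_def if_False
      by (rule sym_sq) (use cm en in \<open>auto simp: neg_part_def\<close>)
    moreover have "pos_part (u j) + neg_part (u j) = \<bar>u j\<bar>"
      unfolding pos_part_def neg_part_def by auto
    ultimately show ?thesis by (simp add: add_divide_distrib[symmetric] distrib_left[symmetric])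
  qed
  have "(\<Sum>j\<in>(UNIV::'d set). \<Sum>m=1..M.
                (cmod (reed_symbol \<eta> c \<mu> K \<beta> Q g \<phi> t k j m True))^2
              + (cmod (reed_symbol \<eta> c \<mu> K \<beta> Q g \<phi> t k j m False))^2)
      = (\<Sum>j\<in>(UNIV::'d set). \<Sum>m=1..M. \<eta> * c m * \<bar>u j\<bar> / (\<mu> k)^2)"
    by (intro sum.cong refl) (simp add: tm)
  also have "\<dots> = (\<Sum>j\<in>(UNIV::'d set). (\<eta> * \<bar>u j\<bar> / (\<mu> k)^2) * CM)"
    unfolding CM_def sum_distrib_left
    by (intro sum.cong refl) (simp add: algebra_simps)
  also have "\<dots> = (\<eta> * CM / (\<mu> k)^2) * (\<Sum>j\<in>(UNIV::'d set). \<bar>u j\<bar>)"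
    by (simp add: sum_distrib_left sum_distrib_right sum_divide_distrib algebra_simps)
  also have "(\<Sum>j\<in>(UNIV::'d set). \<bar>u j\<bar>) = \<beta> / real K * (\<Sum>j\<in>UNIV. \<bar>S $ j\<bar>)"
    by (simp add: uj sum_distrib_left)
  also have "(\<eta> * CM / (\<mu> k)^2) * (\<beta> / real K * (\<Sum>j\<in>UNIV. \<bar>S $ j\<bar>))
     \<le> (\<eta> * CM / (\<mu> k)^2) * (\<beta> / real K * (sqrt d * (real Q * G)))"
    using Sb en CMp mu b Kp unfolding CM_def
    by (intro mult_left_mono) auto
  finally have L: "(\<Sum>j\<in>(UNIV::'d set). \<Sum>m=1..M.
                (cmod (reed_symbol \<eta> c \<mu> K \<beta> Q g \<phi> t k j m True))^2
              + (cmod (reed_symbol \<eta> c \<mu> K \<beta> Q g \<phi> t k j m False))^2)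
      \<le> (\<eta> * CM / (\<mu> k)^2) * (\<beta> / real K * (sqrt d * (real Q * G)))"
    .
  have "(\<eta> * CM / (\<mu> k)^2) * (\<beta> / real K * (sqrt d * (real Q * G)))
     \<le> (E k * real K * sqrt d * (\<mu> k)^2 / (CM * \<beta> * real Q * G) * CM / (\<mu> k)^2) * (\<beta> / real K * (sqrt d * (real Q * G)))"
    using eb en CMp mu b Kp Gp Qp unfolding CM_def d_def
    by (intro mult_right_mono divide_right_mono mult_right_mono) auto
  also have "\<dots> = E k * sqrt d * sqrt d"
    using CMp mu b Kp Gp Qp unfolding CM_def by (simp add: field_simps)
  also have "\<dots> = E k * d" using dpos by simp
  finally have R: "(\<eta> * CM / (\<mu> k)^2) * (\<beta> / real K * (sqrt d * (real Q * G))) \<le> E k * d" .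
  have X: "(\<Sum>j\<in>(UNIV::'d set). \<Sum>m=1..M.
                (cmod (reed_symbol \<eta> c \<mu> K \<beta> Q g \<phi> t k j m True))^2
              + (cmod (reed_symbol \<eta> c \<mu> K \<beta> Q g \<phi> t k j m False))^2) \<le> E k * d"
    using L R by linarith
  have "(1 / d) * (\<Sum>j\<in>(UNIV::'d set). \<Sum>m=1..M.
                (cmod (reed_symbol \<eta> c \<mu> K \<beta> Q g \<phi> t k j m True))^2
              + (cmod (reed_symbol \<eta> c \<mu> K \<beta> Q g \<phi> t k j m False))^2) \<le> (1/d) * (E k * d)"
    using X dpos by (intro mult_left_mono) auto
  also have "\<dots> = E k" using dpos by simp
  finally show ?thesis unfolding d_def .
qed

lemma alg3:
  fixes b A q G s d e0 :: real
  assumes "b > 0" "A > 0" "e0 = A / b"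
  shows "(let \<eta> = e0 in
           (b * q * G)^2 + 2 * s * sqrt d / \<eta> * (b * q * G)
           + 2 * d * s^2 / \<eta>^2) =
        ((q * G)^2 + 2 * s * sqrt d * (q * G) / A + 2 * d * s^2 / (A)^2) * b^2"
  using assms unfolding Let_def power_divide divide_divide_eq_right
  by (simp add: algebra_simps power2_eq_square add_divide_distrib)

lemma alg4:
  fixes b A q G s d e0 S C M :: real
  assumes "b > 0" "A > 0" "C > 0" "e0 = A / b"
  shows "(let \<eta> = e0; CM = C in
           S / CM^2 * (b * q * G)^2
           + 2 * s * sqrt d / (\<eta> * CM) * (b * q * G)
           + 2 * d * M * s^2 / (\<eta>^2 * CM^2)) =
        (S / C^2 * (q * G)^2 + 2 * s * sqrt d * (q * G) / (A * C)
          + 2 * d * M * s^2 / (A^2 * C^2)) * b^2"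
  using assms unfolding Let_def power_divide divide_divide_eq_right
  by (simp add: algebra_simps power2_eq_square add_divide_distrib)

lemma cO: "(\<lambda>\<beta>::real. C * \<beta>^2) \<in> O[F](\<lambda>\<beta>. \<beta>^2)"
  by (intro bigoI[where c="\<bar>C\<bar>"]) (auto simp: abs_mult)

theorem lemma2:
  fixes K M Q :: nat
    and c E \<mu> :: "nat \<Rightarrow> real"
    and G \<sigma>z2 :: real
  assumes K_pos: "K > 0" and M_pos: "M > 0" and Q_pos: "Q > 0"
    and G_pos: "G > 0" and \<sigma>_pos: "\<sigma>z2 > 0"
    and c_nonneg: "\<forall>m\<in>{1..M}. c m \<ge> 0"
    and CM_pos: "(\<Sum>m=1..M. c m) > 0"
    and E_pos: "\<forall>k\<in>{1..K}. E k > 0"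
    and \<mu>_pos: "\<forall>k\<in>{1..K}. (\<mu> k)^2 > 0"
  shows
    "(\<forall>(\<beta>::real) (g :: nat \<Rightarrow> nat \<Rightarrow> nat \<Rightarrow> real^'d) \<phi> t.
        \<beta> > 0 \<longrightarrow>
        (\<forall>t' k q. norm (g t' k q) \<le> G) \<longrightarrow>
        (\<forall>k\<in>{1..K}.
           (1 / real CARD('d)) *
             (\<Sum>j\<in>(UNIV::'d set). \<Sum>m=1..M.
                (cmod (reed_symbol (reed_eta K CARD('d) E \<mu> (\<Sum>m=1..M. c m) Q G \<beta>)
                         c \<mu> K \<beta> Q g \<phi> t k j m True))^2
              + (cmod (reed_symbol (reed_eta K CARD('d) E \<mu> (\<Sum>m=1..M. c m) Q G \<beta>)
                         c \<mu> K \<beta> Q g \<phi> t k j m False))^2)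
           \<le> E k))
     \<and> (\<lambda>\<beta>. reed_eta K CARD('d) E \<mu> (\<Sum>m=1..M. c m) Q G \<beta>) \<in> \<Theta>[at_right 0](\<lambda>\<beta>. 1 / \<beta>)
     \<and> (\<lambda>\<beta>. let \<eta> = reed_eta K CARD('d) E \<mu> 1 Q G \<beta> in
           (\<beta> * real Q * G)^2 + 2 * \<sigma>z2 * sqrt (real CARD('d)) / \<eta> * (\<beta> * real Q * G)
           + 2 * real CARD('d) * \<sigma>z2^2 / \<eta>^2) \<in> O[at_right 0](\<lambda>\<beta>. \<beta>^2)
     \<and> (\<lambda>\<beta>. let \<eta> = reed_eta K CARD('d) E \<mu> (\<Sum>m=1..M. c m) Q G \<beta>;
                 CM = (\<Sum>m=1..M. c m) in
           (\<Sum>m=1..M. (c m)^2) / CM^2 * (\<beta> * real Q * G)^2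
           + 2 * \<sigma>z2 * sqrt (real CARD('d)) / (\<eta> * CM) * (\<beta> * real Q * G)
           + 2 * real CARD('d) * real M * \<sigma>z2^2 / (\<eta>^2 * CM^2)) \<in> O[at_right 0](\<lambda>\<beta>. \<beta>^2)"
proof -
  define d where "d = CARD('d)"
  define CM where "CM = (\<Sum>m=1..M. c m)"
  define A where "A = (\<lambda>CM. Min ((\<lambda>k. E k * real K * sqrt (real d) * (\<mu> k)^2 / (CM * real Q * G)) ` {1..K}))"
  have dpos: "d > 0" unfolding d_def by simp
  have Apos: "A C > 0" if "C > 0" for C
    unfolding A_def using K_pos E_pos \<mu>_pos that Q_pos G_pos dpos
    by (subst Min_gr_iff) (auto intro!: divide_pos_pos mult_pos_pos)
  have etaeq: "reed_eta K d E \<mu> C Q G \<beta> = A C / \<beta>" if "\<beta> > 0" for C \<beta>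
    unfolding A_def using eta_eq[OF that K_pos] by simp
  have ev: "\<forall>\<^sub>F \<beta> in at_right (0::real). \<beta> > 0"
    by (simp add: eventually_at_right_less)
  have P1: "\<forall>(\<beta>::real) (g :: nat \<Rightarrow> nat \<Rightarrow> nat \<Rightarrow> real^'d) \<phi> t.
        \<beta> > 0 \<longrightarrow>
        (\<forall>t' k q. norm (g t' k q) \<le> G) \<longrightarrow>
        (\<forall>k\<in>{1..K}.
           (1 / real CARD('d)) *
             (\<Sum>j\<in>(UNIV::'d set). \<Sum>m=1..M.
                (cmod (reed_symbol (reed_eta K CARD('d) E \<mu> (\<Sum>m=1..M. c m) Q G \<beta>)
                         c \<mu> K \<beta> Q g \<phi> t k j m True))^2
              + (cmod (reed_symbol (reed_eta K CARD('d) E \<mu> (\<Sum>m=1..M. c m) Q G \<beta>)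
                         c \<mu> K \<beta> Q g \<phi> t k j m False))^2)
           \<le> E k)"
  proof (intro allI impI ballI)
    fix \<beta> :: real and g :: "nat \<Rightarrow> nat \<Rightarrow> nat \<Rightarrow> real^'d" and \<phi> t k
    assume b: "\<beta> > 0" and gb: "\<forall>t' k q. norm (g t' k q) \<le> G" and k: "k \<in> {1..K}"
    have e: "reed_eta K CARD('d) E \<mu> CM Q G \<beta> = A CM / \<beta>"
      using etaeq[OF b] unfolding d_def by simp
    have CMp: "CM > 0" unfolding CM_def using CM_pos .
    have "A CM \<le> E k * real K * sqrt (real d) * (\<mu> k)^2 / (CM * real Q * G)"
      unfolding A_def using k by (intro Min_le) auto
    then have "A CM / \<beta> \<le> E k * real K * sqrt (real d) * (\<mu> k)^2 / (CM * real Q * G) / \<beta>"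
      using b by (intro divide_right_mono) auto
    also have "\<dots> = E k * real K * sqrt (real d) * (\<mu> k)^2 / (CM * \<beta> * real Q * G)"
      by (simp add: field_simps)
    finally have eb: "A CM / \<beta> \<le> E k * real K * sqrt (real d) * (\<mu> k)^2 / (CM * \<beta> * real Q * G)" .
    show "(1 / real CARD('d)) *
             (\<Sum>j\<in>(UNIV::'d set). \<Sum>m=1..M.
                (cmod (reed_symbol (reed_eta K CARD('d) E \<mu> (\<Sum>m=1..M. c m) Q G \<beta>)
                         c \<mu> K \<beta> Q g \<phi> t k j m True))^2
              + (cmod (reed_symbol (reed_eta K CARD('d) E \<mu> (\<Sum>m=1..M. c m) Q G \<beta>)
                         c \<mu> K \<beta> Q g \<phi> t k j m False))^2)
           \<le> E k"
      unfolding CM_def[symmetric] e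
      by (rule energy[OF b K_pos Q_pos G_pos c_nonneg CM_pos]) 
         (use \<mu>_pos k gb eb Apos[OF CMp] b in \<open>auto simp: CM_def d_def\<close>)
  qed
  have P2: "(\<lambda>\<beta>. reed_eta K CARD('d) E \<mu> (\<Sum>m=1..M. c m) Q G \<beta>) \<in> \<Theta>[at_right 0](\<lambda>\<beta>. 1 / \<beta>)"
  proof -
    have "\<forall>\<^sub>F \<beta> in at_right (0::real). reed_eta K CARD('d) E \<mu> (\<Sum>m=1..M. c m) Q G \<beta> = A CM * (1 / \<beta>)"
      using ev by eventually_elim (simp add: etaeq[unfolded d_def] CM_def)
    moreover have "(\<lambda>\<beta>::real. A CM * (1 / \<beta>)) \<in> \<Theta>[at_right 0](\<lambda>\<beta>. 1 / \<beta>)"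
      using Apos[of CM] CM_pos unfolding CM_def by (subst landau_theta.cmult_in_iff) auto
    ultimately show ?thesis by (subst landau_theta.in_cong)
  qed
  have P3: "(\<lambda>\<beta>. let \<eta> = reed_eta K CARD('d) E \<mu> 1 Q G \<beta> in
           (\<beta> * real Q * G)^2 + 2 * \<sigma>z2 * sqrt (real CARD('d)) / \<eta> * (\<beta> * real Q * G)
           + 2 * real CARD('d) * \<sigma>z2^2 / \<eta>^2) \<in> O[at_right 0](\<lambda>\<beta>. \<beta>^2)"
  proof -
    have A1: "A 1 > 0" using Apos by simp
    have "\<forall>\<^sub>F \<beta> in at_right (0::real). (let \<eta> = reed_eta K CARD('d) E \<mu> 1 Q G \<beta> in
           (\<beta> * real Q * G)^2 + 2 * \<sigma>z2 * sqrt (real CARD('d)) / \<eta> * (\<beta> * real Q * G)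
           + 2 * real CARD('d) * \<sigma>z2^2 / \<eta>^2) =
        ((real Q * G)^2 + 2 * \<sigma>z2 * sqrt d * (real Q * G) / A 1 + 2 * real d * \<sigma>z2^2 / (A 1)^2) * \<beta>^2"
      using ev
    proof eventually_elim
      case (elim \<beta>)
      have e: "reed_eta K CARD('d) E \<mu> 1 Q G \<beta> = A 1 / \<beta>" using etaeq[OF elim] unfolding d_def by simp
      show ?case unfolding d_def by (rule alg3[OF elim A1 e])
    qed
    moreover have "(\<lambda>\<beta>::real. ((real Q * G)^2 + 2 * \<sigma>z2 * sqrt d * (real Q * G) / A 1 + 2 * real d * \<sigma>z2^2 / (A 1)^2) * \<beta>^2) \<in> O[at_right 0](\<lambda>\<beta>. \<beta>^2)"
      by (rule cO)
    ultimately show ?thesis by (subst landau_o.big.in_cong)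
  qed
  have P4: "(\<lambda>\<beta>. let \<eta> = reed_eta K CARD('d) E \<mu> (\<Sum>m=1..M. c m) Q G \<beta>;
                 CM = (\<Sum>m=1..M. c m) in
           (\<Sum>m=1..M. (c m)^2) / CM^2 * (\<beta> * real Q * G)^2
           + 2 * \<sigma>z2 * sqrt (real CARD('d)) / (\<eta> * CM) * (\<beta> * real Q * G)
           + 2 * real CARD('d) * real M * \<sigma>z2^2 / (\<eta>^2 * CM^2)) \<in> O[at_right 0](\<lambda>\<beta>. \<beta>^2)"
  proof -
    have AC: "A CM > 0" using Apos CM_pos unfolding CM_def by simp
    have CMp: "CM > 0" using CM_pos unfolding CM_def by simp
    have "\<forall>\<^sub>F \<beta> in at_right (0::real). (let \<eta> = reed_eta K CARD('d) E \<mu> (\<Sum>m=1..M. c m) Q G \<beta>;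
                 CM = (\<Sum>m=1..M. c m) in
           (\<Sum>m=1..M. (c m)^2) / CM^2 * (\<beta> * real Q * G)^2
           + 2 * \<sigma>z2 * sqrt (real CARD('d)) / (\<eta> * CM) * (\<beta> * real Q * G)
           + 2 * real CARD('d) * real M * \<sigma>z2^2 / (\<eta>^2 * CM^2)) =
        ((\<Sum>m=1..M. (c m)^2) / CM^2 * (real Q * G)^2 + 2 * \<sigma>z2 * sqrt d * (real Q * G) / (A CM * CM)
          + 2 * real d * real M * \<sigma>z2^2 / ((A CM)^2 * CM^2)) * \<beta>^2"
      using ev
    proof eventually_elim
      case (elim \<beta>)
      have e: "reed_eta K CARD('d) E \<mu> CM Q G \<beta> = A CM / \<beta>" using etaeq[OF elim] unfolding d_def by simp
      show ?case unfolding d_def CM_def[symmetric] by (rule alg4[OF elim AC CMp e])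
    qed
    moreover have "(\<lambda>\<beta>::real. ((\<Sum>m=1..M. (c m)^2) / CM^2 * (real Q * G)^2 + 2 * \<sigma>z2 * sqrt d * (real Q * G) / (A CM * CM)
          + 2 * real d * real M * \<sigma>z2^2 / ((A CM)^2 * CM^2)) * \<beta>^2) \<in> O[at_right 0](\<lambda>\<beta>. \<beta>^2)"
      by (rule cO)
    ultimately show ?thesis by (subst landau_o.big.in_cong)
  qed
  show ?thesis by (rule conjI[OF P1 conjI[OF P2 conjI[OF P3 P4]]])
qed

end
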